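(* Let $\Box$ be an axis-parallel square of side length $1/2$ in $\mathbb{R}^2$, let $l$ be the line containing its top edge, and let $H$ be the open halfplane above $l$. Let $A$ be a finite set of points in $\Box$, and let $\xi(A)$ be the boundary of the closure of $H\setminus\bigcup_{a\in A}\odot_a$. Then $\xi(A)$ is an $x$-monotone curve whose leftmost and rightmost pieces are horizontal rays and each other piece is a portion of the boundary circle of $\odot_a$ for some $a\in A$ (said to be contributed by $a$), and: (1) if $\sigma,\sigma'$ are pieces of $\xi(A)$ contributed by $a$ and $a'$ respectively, then $\sigma$ lies to the left of $\sigma'$ on $\xi(A)$ iff $a$ lies to the left of $a'$; (2) for each $a\in A$ at most one piece of $\xi(A)$ is contributed by $a$, so $\xi(A)$ has $O(|A|)$ pieces.
   Context: $\odot_a$ denotes the closed disk of radius 1 centered at $a$. A piece is a maximal portion of the curve lying on a single circle (or ray). *)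

theory Defs
  imports "HOL-Analysis.Analysis"
begin

text \<open>Points of the plane are pairs of reals; the product metric on real \<times> real
  is the Euclidean one, so cball a 1 is the closed unit disk centred at a.\<close>

definition square :: "real \<Rightarrow> real \<Rightarrow> (real \<times> real) set" where
  "square x0 y0 = {x0..x0 + 1/2} \<times> {y0..y0 + 1/2}"

definition halfplane_above :: "real \<Rightarrow> (real \<times> real) set" where
  "halfplane_above y0 = {p. snd p > y0 + 1/2}"

definition xi :: "real \<Rightarrow> (real \<times> real) set \<Rightarrow> (real \<times> real) set" where
  "xi y0 A = frontier (closure (halfplane_above y0 - (\<Union>a\<in>A. cball a 1)))"

text \<open>A decomposition of the graph of f (an x-monotone curve) into maximal pieces:
  breakpoints t 0 < t 1 < ... < t n; the leftmost piece (x \<le> t 0) and the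
  rightmost piece (x \<ge> t n) are horizontal rays on the line y = y0 + 1/2;
  for i < n, the piece over [t i, t (i+1)] lies on the boundary circle of the
  disk centred at c i \<in> A (contributed by c i).  Maximality: consecutive pieces lie
  on different circles (and n \<ge> 1, so the two rays are separated).\<close>
definition piece_decomp ::
  "real \<Rightarrow> (real \<times> real) set \<Rightarrow> (real \<Rightarrow> real) \<Rightarrow> nat \<Rightarrow> (nat \<Rightarrow> real) \<Rightarrow> (nat \<Rightarrow> real \<times> real) \<Rightarrow> bool"
where
  "piece_decomp y0 A f n t c \<longleftrightarrow>
     n \<ge> 1 \<and>
     (\<forall>i<n. t i < t (Suc i)) \<and>
     (\<forall>x. x \<le> t 0 \<longrightarrow> f x = y0 + 1/2) \<and>
     (\<forall>x. x \<ge> t n \<longrightarrow> f x = y0 + 1/2) \<and>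
     (\<forall>i<n. c i \<in> A \<and> (\<forall>x\<in>{t i..t (Suc i)}. (x, f x) \<in> sphere (c i) 1)) \<and>
     (\<forall>i. Suc i < n \<longrightarrow> c i \<noteq> c (Suc i))"

end

theory Submission
  imports Defs
begin

lemma deriv_S:
  fixes c z :: real
  assumes "\<bar>z - c\<bar> < 1"
  shows "((\<lambda>z. sqrt (1 - (z - c)^2)) has_real_derivative (-(z-c) / sqrt (1 - (z-c)^2))) (at z)"
proof -
  have pos: "0 < 1 - (z - c)^2" using assms abs_square_less_1[of "z-c"] by simp
  have d1: "((\<lambda>z. 1 - (z - c)^2) has_real_derivative (-(2*(z-c)))) (at z)"
    by (auto intro!: derivative_eq_intros)
  have D0: "((\<lambda>z. sqrt (1 - (z - c)^2)) has_real_derivative (inverse (sqrt (1 - (z-c)^2)) / 2 * (-(2*(z-c))))) (at z)"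
    by (rule DERIV_chain2[OF DERIV_real_sqrt[OF pos] d1])
  have sp: "sqrt (1 - (z-c)^2) > 0" using pos by simp
  show ?thesis by (rule DERIV_cong[OF D0]) (use sp in \<open>simp add: field_simps\<close>)
qed

lemma ratio_mono:
  fixes t1 t2 :: real
  assumes "t1 < t2" "\<bar>t1\<bar> < 1" "\<bar>t2\<bar> < 1"
  shows "t1 / sqrt (1 - t1^2) < t2 / sqrt (1 - t2^2)"
proof -
  have p1: "0 < 1 - t1^2" using assms abs_square_less_1[of t1] abs_square_less_1[of t2] by simp
  have p2: "0 < 1 - t2^2" using assms abs_square_less_1[of t1] abs_square_less_1[of t2] by simp
  define S1 where "S1 = sqrt (1 - t1^2)"
  define S2 where "S2 = sqrt (1 - t2^2)"
  have s1: "S1 > 0" using p1 S1_def by simp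
  have s2: "S2 > 0" using p2 S2_def by simp
  have key: "t1 * S2 < t2 * S1"
  proof (cases "t1 < 0")
    case True
    show ?thesis
    proof (cases "t2 \<le> 0")
      case True
      have "t1^2 - t2^2 = (t1 - t2) * (t1 + t2)" by (simp add: power2_eq_square algebra_simps)
      moreover have "(t1 - t2) * (t1 + t2) > 0" using \<open>t1 < 0\<close> True assms(1) by (intro mult_neg_neg) auto
      ultimately have "t2^2 < t1^2" by simp
      then have "S1 < S2" unfolding S1_def S2_def by simp
      then have "t1 * S2 < t1 * S1" using \<open>t1 < 0\<close> by simp
      also have "\<dots> \<le> t2 * S1" using assms(1) s1 by simp
      finally show ?thesis .
    next
      case False
      have "t1 * S2 < 0" using \<open>t1 < 0\<close> s2 by (simp add: mult_neg_pos)
      also have "0 \<le> t2 * S1" using False s1 by simp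
      finally show ?thesis .
    qed
  next
    case False
    have "t2^2 - t1^2 = (t2 - t1) * (t2 + t1)" by (simp add: power2_eq_square algebra_simps)
    moreover have "(t2 - t1) * (t2 + t1) > 0" using False assms(1) by (intro mult_pos_pos) auto
    ultimately have "t1^2 < t2^2" by simp
    then have "S2 < S1" unfolding S1_def S2_def by simp
    then have "t1 * S2 \<le> t1 * S1" using False by (simp add: mult_left_mono)
    also have "\<dots> < t2 * S1" using assms(1) s1 by simp
    finally show ?thesis .
  qed
  have "t1 / S1 < t2 / S2" using key s1 s2 by (simp add: divide_less_eq less_divide_eq mult.commute)
  then show ?thesis by (simp add: S1_def S2_def)
qed

lemma mono_h:
  fixes a1 b1 p q :: real
  assumes "b1 < a1" "p < q" "\<forall>z\<in>{p..q}. \<bar>z - a1\<bar> < 1 \<and> \<bar>z - b1\<bar> < 1"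
  shows "sqrt (1 - (p - a1)^2) - sqrt (1 - (p - b1)^2) < sqrt (1 - (q - a1)^2) - sqrt (1 - (q - b1)^2)"
proof (rule DERIV_pos_imp_increasing[OF assms(2), of "\<lambda>z. sqrt (1 - (z - a1)^2) - sqrt (1 - (z - b1)^2)"])
  fix x assume "p \<le> x" "x \<le> q"
  then have d: "\<bar>x - a1\<bar> < 1" "\<bar>x - b1\<bar> < 1" using assms(3) by auto
  have D: "((\<lambda>z. sqrt (1 - (z - a1)^2) - sqrt (1 - (z - b1)^2)) has_real_derivative
      (-(x-a1) / sqrt (1 - (x-a1)^2) - (-(x-b1) / sqrt (1 - (x-b1)^2)))) (at x)"
    by (rule DERIV_diff[OF deriv_S[OF d(1)] deriv_S[OF d(2)]])
  have "(x-a1) / sqrt (1 - (x-a1)^2) < (x-b1) / sqrt (1 - (x-b1)^2)"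
    by (rule ratio_mono) (use assms(1) d in auto)
  moreover have e1: "-(x-a1) / sqrt (1 - (x-a1)^2) = - ((x-a1) / sqrt (1 - (x-a1)^2))"
    by (rule minus_divide_left[symmetric])
  moreover have e2: "-(x-b1) / sqrt (1 - (x-b1)^2) = - ((x-b1) / sqrt (1 - (x-b1)^2))"
    by (rule minus_divide_left[symmetric])
  ultimately have "0 < (-(x-a1) / sqrt (1 - (x-a1)^2) - (-(x-b1) / sqrt (1 - (x-b1)^2)))"
    by linarith
  then show "\<exists>y. ((\<lambda>z. sqrt (1 - (z - a1)^2) - sqrt (1 - (z - b1)^2)) has_real_derivative y) (at x) \<and> 0 < y"
    using D by blast
qed

definition gc :: "real \<times> real \<Rightarrow> real \<Rightarrow> real" where
  "gc a x = snd a + sqrt (max 0 (1 - (x - fst a)^2))"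

lemma gc_eq: "\<bar>x - fst a\<bar> \<le> 1 \<Longrightarrow> gc a x = snd a + sqrt (1 - (x - fst a)^2)"
proof -
  assume "\<bar>x - fst a\<bar> \<le> 1"
  then have "(x - fst a)^2 \<le> 1" using abs_square_le_1 by blast
  then show ?thesis by (simp add: gc_def)
qed

lemma gc_strict:
  assumes "fst b < fst a" "p < q" "\<forall>z\<in>{p..q}. \<bar>z - fst a\<bar> < 1 \<and> \<bar>z - fst b\<bar> < 1"
  shows "gc a p - gc b p < gc a q - gc b q"
proof -
  have "sqrt (1 - (p - fst a)^2) - sqrt (1 - (p - fst b)^2) < sqrt (1 - (q - fst a)^2) - sqrt (1 - (q - fst b)^2)"
    by (rule mono_h[OF assms])
  moreover have "\<bar>p - fst a\<bar> \<le> 1" "\<bar>p - fst b\<bar> \<le> 1" "\<bar>q - fst a\<bar> \<le> 1" "\<bar>q - fst b\<bar> \<le> 1"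
    using assms(2,3) by (auto dest: bspec[of _ _ p] bspec[of _ _ q])
  ultimately show ?thesis by (simp add: gc_eq)
qed

lemma gc_same: "fst a = fst b \<Longrightarrow> gc a x - gc b x = snd a - snd b"
  by (simp add: gc_def)

lemma gc_cont: "continuous_on UNIV (gc a)"
  unfolding gc_def by (intro continuous_intros)

lemma cont_Max:
  fixes F :: "'a \<Rightarrow> real \<Rightarrow> real"
  assumes "finite A" "\<forall>a\<in>A. continuous_on UNIV (F a)"
  shows "continuous_on UNIV (\<lambda>x. Max (insert L ((\<lambda>a. F a x) ` A)))"
  using assms
proof (induction A rule: finite_induct)
  case empty
  then show ?case by (simp add: continuous_on_const)
next
  case (insert b A)
  have eq: "(\<lambda>x. Max (insert L ((\<lambda>a. F a x) ` insert b A))) = (\<lambda>x. max (F b x) (Max (insert L ((\<lambda>a. F a x) ` A))))"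
    using insert(1) by (intro ext, cases "A = {}") (simp_all add: max.commute max.left_commute)
  show ?case unfolding eq
    by (rule continuous_on_max) (use insert in auto)
qed

lemma in_cball_iff:
  fixes a :: "real \<times> real"
  assumes "snd a < y"
  shows "(x, y) \<in> cball a 1 \<longleftrightarrow> y \<le> gc a x"
proof -
  obtain a1 a2 where a: "a = (a1, a2)" by (cases a)
  have d: "0 < y - a2" using assms a by simp
  have "(x, y) \<in> cball a 1 \<longleftrightarrow> (a1 - x)^2 + (a2 - y)^2 \<le> 1"
    by (simp add: a dist_Pair_Pair dist_real_def)
  also have "\<dots> \<longleftrightarrow> (y - a2)^2 \<le> max 0 (1 - (x - a1)^2)"
  proof -
    have s1: "(a1 - x)^2 = (x-a1)^2" "(a2-y)^2 = (y-a2)^2" by (simp_all add: power2_commute)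
    have pos: "0 < (y - a2)^2" using d by simp
    show ?thesis unfolding s1
    proof
      assume "(x-a1)^2 + (y-a2)^2 \<le> 1"
      then show "(y-a2)^2 \<le> max 0 (1-(x-a1)^2)" by (simp add: le_max_iff_disj)
    next
      assume "(y-a2)^2 \<le> max 0 (1-(x-a1)^2)"
      then have "(y-a2)^2 \<le> 0 \<or> (y-a2)^2 \<le> 1-(x-a1)^2" by (simp add: le_max_iff_disj)
      then show "(x-a1)^2 + (y-a2)^2 \<le> 1" using pos by linarith
    qed
  qed
  also have "\<dots> \<longleftrightarrow> sqrt ((y - a2)^2) \<le> sqrt (max 0 (1 - (x - a1)^2))"
    by (simp only: real_sqrt_le_iff)
  also have "\<dots> \<longleftrightarrow> y \<le> gc a x"
    using d by (auto simp: a gc_def)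
  finally show ?thesis .
qed

locale envs =
  fixes x0 y0 :: real and A :: "(real \<times> real) set"
  assumes fin: "finite A" and ne: "A \<noteq> {}" and sq: "A \<subseteq> square x0 y0"
begin

definition L :: real where "L = y0 + 1/2"
definition env :: "real \<Rightarrow> real" where "env x = Max (insert L ((\<lambda>a. gc a x) ` A))"

lemma inA: "a \<in> A \<Longrightarrow> x0 \<le> fst a \<and> fst a \<le> x0 + 1/2 \<and> L - 1/2 \<le> snd a \<and> snd a \<le> L"
  using sq by (auto simp: square_def L_def mem_Times_iff)

lemma env_ge_L: "L \<le> env x"
  unfolding env_def using fin by simp

lemma env_ge: "a \<in> A \<Longrightarrow> gc a x \<le> env x"
  unfolding env_def using fin by simp

lemma env_less_iff: "env x < y \<longleftrightarrow> L < y \<and> (\<forall>a\<in>A. gc a x < y)"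
  unfolding env_def using fin by simp

lemma env_gt: "L < env x \<Longrightarrow> \<exists>a\<in>A. env x = gc a x"
proof -
  assume h: "L < env x"
  have "env x \<in> insert L ((\<lambda>a. gc a x) ` A)" unfolding env_def using fin by (intro Max_in) auto
  then show ?thesis using h by auto
qed

lemma env_cont: "continuous_on UNIV env"
proof -
  have "continuous_on UNIV (\<lambda>x. Max (insert L ((\<lambda>a. gc a x) ` A)))"
    by (rule cont_Max[OF fin]) (simp add: gc_cont)
  then show ?thesis unfolding env_def[abs_def] .
qed

lemma env_cont_at: "isCont env x"
  using env_cont by (simp add: continuous_on_eq_continuous_at)

lemma Hminus: "halfplane_above y0 - (\<Union>a\<in>A. cball a 1) = {p. env (fst p) < snd p}"
proof (intro set_eqI iffI)
  fix p assume p: "p \<in> halfplane_above y0 - (\<Union>a\<in>A. cball a 1)"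
  obtain x y where pxy: "p = (x, y)" by (cases p)
  have y: "L < y" using p pxy by (simp add: halfplane_above_def L_def)
  have "\<forall>a\<in>A. gc a x < y"
  proof
    fix a assume a: "a \<in> A"
    have "snd a < y" using inA[OF a] y by simp
    then show "gc a x < y" using in_cball_iff[of a y x] p pxy a by auto
  qed
  then show "p \<in> {p. env (fst p) < snd p}" using y pxy env_less_iff by simp
next
  fix p assume p: "p \<in> {p. env (fst p) < snd p}"
  obtain x y where pxy: "p = (x, y)" by (cases p)
  have y: "L < y" and all: "\<forall>a\<in>A. gc a x < y" using p pxy env_less_iff by auto
  have "p \<notin> cball a 1" if a: "a \<in> A" for a
  proof -
    have "snd a < y" using inA[OF a] y by simp
    then show ?thesis using in_cball_iff[of a y x] all a pxy by auto
  qed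
  then show "p \<in> halfplane_above y0 - (\<Union>a\<in>A. cball a 1)"
    using y pxy by (auto simp: halfplane_above_def L_def)
qed

lemma closed_epi: "closed {p. env (fst p) \<le> snd p}"
proof -
  have "continuous_on UNIV (\<lambda>p::real\<times>real. env (fst p))"
    by (rule continuous_on_compose2[OF env_cont]) (auto intro: continuous_intros)
  then show ?thesis
    by (intro closed_Collect_le) (auto intro: continuous_intros)
qed

lemma open_epi: "open {p. env (fst p) < snd p}"
proof -
  have "continuous_on UNIV (\<lambda>p::real\<times>real. env (fst p))"
    by (rule continuous_on_compose2[OF env_cont]) (auto intro: continuous_intros)
  then show ?thesis
    by (intro open_Collect_less) (auto intro: continuous_intros)
qed

lemma closure_epi: "closure {p. env (fst p) < snd p} = {p. env (fst p) \<le> snd p}"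
proof
  show "closure {p. env (fst p) < snd p} \<subseteq> {p. env (fst p) \<le> snd p}"
    by (rule closure_minimal[OF _ closed_epi]) auto
next
  show "{p. env (fst p) \<le> snd p} \<subseteq> closure {p. env (fst p) < snd p}"
  proof
    fix p assume p: "p \<in> {p. env (fst p) \<le> snd p}"
    obtain x y where pxy: "p = (x, y)" by (cases p)
    show "p \<in> closure {p. env (fst p) < snd p}"
      unfolding closure_approachable
    proof (intro allI impI)
      fix e :: real assume e: "0 < e"
      have "(x, y + e/2) \<in> {p. env (fst p) < snd p}" using p pxy e by simp
      moreover have "dist (x, y + e/2) p < e" using e pxy by (simp add: dist_Pair_Pair dist_real_def)
      ultimately show "\<exists>q\<in>{p. env (fst p) < snd p}. dist q p < e" by blast
    qed
  qed
qed

lemma interior_epi: "interior {p. env (fst p) \<le> snd p} = {p. env (fst p) < snd p}"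
proof
  show "{p. env (fst p) < snd p} \<subseteq> interior {p. env (fst p) \<le> snd p}"
    by (rule interior_maximal[OF _ open_epi]) auto
next
  show "interior {p. env (fst p) \<le> snd p} \<subseteq> {p. env (fst p) < snd p}"
  proof
    fix p assume p: "p \<in> interior {p. env (fst p) \<le> snd p}"
    obtain x y where pxy: "p = (x, y)" by (cases p)
    obtain e where e: "0 < e" "ball p e \<subseteq> {p. env (fst p) \<le> snd p}"
      using p mem_interior by blast
    have "(x, y - e/2) \<in> ball p e" using e pxy by (simp add: dist_Pair_Pair dist_real_def)
    then have "env x \<le> y - e/2" using e by auto
    then show "p \<in> {p. env (fst p) < snd p}" using e pxy by simp
  qed
qed

lemma xi_graph: "xi y0 A = {(x, env x) | x. True}"
proof -
  have "xi y0 A = {p. env (fst p) \<le> snd p} - {p. env (fst p) < snd p}"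
    unfolding xi_def Hminus closure_epi frontier_def closure_closed[OF closed_epi] interior_epi ..
  also have "\<dots> = {(x, env x) | x. True}" by force
  finally show ?thesis .
qed


lemma sphere_gc:
  assumes a: "a \<in> A" and s: "(x, env x) \<in> sphere a 1"
  shows "(x - fst a)^2 \<le> 1 \<and> env x = gc a x"
proof -
  obtain a1 a2 where aa: "a = (a1, a2)" by (cases a)
  have e: "(a1 - x)^2 + (a2 - env x)^2 = 1" using s aa by (simp add: dist_Pair_Pair dist_real_def)
  have ge: "a2 \<le> env x" using inA[OF a] env_ge_L[of x] aa by simp
  have sq: "(env x - a2)^2 = 1 - (x - a1)^2" using e by (simp add: power2_commute algebra_simps)
  have "0 \<le> (env x - a2)^2" by simp
  then have le: "(x - a1)^2 \<le> 1" using sq by linarith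
  have "sqrt ((env x - a2)^2) = env x - a2" using ge by simp
  then have "env x - a2 = sqrt (1 - (x - a1)^2)" using sq by simp
  then show ?thesis using le aa by (simp add: gc_def)
qed

lemma interior_abs:
  fixes u v p a1 :: real
  assumes "\<forall>x\<in>{u..v}. (x - a1)^2 \<le> 1" "u < p" "p < v"
  shows "\<bar>p - a1\<bar> < 1"
proof (rule ccontr)
  assume "\<not> \<bar>p - a1\<bar> < 1"
  then consider "p - a1 \<ge> 1" | "p - a1 \<le> -1" by linarith
  then show False
  proof cases
    case 1
    have "((p+v)/2 - a1)^2 \<le> 1" using assms by auto
    moreover have pv: "p < (p+v)/2" using assms(3) by simp
    have "(p+v)/2 - a1 > 1" using 1 pv by linarith
    moreover have "1 < ((p+v)/2 - a1)^2" by (rule one_less_power) (use calculation in auto)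
    ultimately show False by linarith
  next
    case 2
    have "((u+p)/2 - a1)^2 \<le> 1" using assms by auto
    moreover have up: "(u+p)/2 < p" using assms(2) by simp
    have "(u+p)/2 - a1 < -1" using 2 up by linarith
    moreover have "1 < (-((u+p)/2 - a1))^2" by (rule one_less_power) (use calculation in auto)
    ultimately show False by (simp only: power2_minus)
  qed
qed

lemma piece_facts:
  assumes pd: "piece_decomp y0 A env n t c" and i: "i < n"
  shows "c i \<in> A" "\<forall>x\<in>{t i..t (Suc i)}. env x = gc (c i) x"
    "\<And>p. t i < p \<Longrightarrow> p < t (Suc i) \<Longrightarrow> \<bar>p - fst (c i)\<bar> < 1"
proof -
  have ci: "c i \<in> A" and sph: "\<forall>x\<in>{t i..t (Suc i)}. (x, env x) \<in> sphere (c i) 1"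
    using pd i unfolding piece_decomp_def by auto
  show "c i \<in> A" by (rule ci)
  show "\<forall>x\<in>{t i..t (Suc i)}. env x = gc (c i) x" using sphere_gc[OF ci] sph by blast
  have "\<forall>x\<in>{t i..t (Suc i)}. (x - fst (c i))^2 \<le> 1" using sphere_gc[OF ci] sph by blast
  then show "\<And>p. t i < p \<Longrightarrow> p < t (Suc i) \<Longrightarrow> \<bar>p - fst (c i)\<bar> < 1"
    using interior_abs by blast
qed

lemma order_consec:
  assumes pd: "piece_decomp y0 A env n t c" and i: "Suc i < n"
  shows "fst (c i) < fst (c (Suc i))"
proof (rule ccontr)
  assume H: "\<not> fst (c i) < fst (c (Suc i))"
  define a where "a = c i"
  define b where "b = c (Suc i)"
  have ab: "a \<noteq> b" using pd i unfolding piece_decomp_def a_def b_def by auto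
  have t1: "t i < t (Suc i)" and t2: "t (Suc i) < t (Suc (Suc i))" using pd i unfolding piece_decomp_def by auto
  define p where "p = (t i + t (Suc i)) / 2"
  define q where "q = (t (Suc i) + t (Suc (Suc i))) / 2"
  have p1: "t i < p" "p < t (Suc i)" using t1 p_def by auto
  have q1: "t (Suc i) < q" "q < t (Suc (Suc i))" using t2 q_def by auto
  have pq: "p < q" using p1 q1 by simp
  note F1 = piece_facts[OF pd, of i] and F2 = piece_facts[OF pd, of "Suc i"]
  have aA: "a \<in> A" and bA: "b \<in> A" using F1(1) F2(1) i a_def b_def by auto
  have envp: "env p = gc a p" using F1(2) p1 i a_def by auto
  have envq: "env q = gc b q" using F2(2) q1 i b_def by auto
  have hp: "gc a p - gc b p \<ge> 0" using env_ge[OF bA, of p] envp by simp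
  have hq: "gc a q - gc b q \<le> 0" using env_ge[OF aA, of q] envq by simp
  have i0: "i < n" using i by simp
  have ap: "\<bar>p - fst a\<bar> < 1" using F1(3)[OF i0 p1] a_def by auto
  have bq: "\<bar>q - fst b\<bar> < 1" using F2(3)[OF i q1] i b_def by auto
  show False
  proof (cases "fst a = fst b")
    case True
    have "snd a - snd b \<ge> 0" using hp gc_same[OF True, of p] by simp
    moreover have "snd a - snd b \<le> 0" using hq gc_same[OF True, of q] by simp
    ultimately have "snd a = snd b" by simp
    then have "a = b" using True by (simp add: prod_eq_iff)
    then show False using ab by simp
  next
    case False
    then have lt: "fst b < fst a" using H a_def b_def by simp
    have "\<forall>z\<in>{p..q}. \<bar>z - fst a\<bar> < 1 \<and> \<bar>z - fst b\<bar> < 1"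
      using ap bq lt by auto
    from gc_strict[OF lt pq this] hp hq show False by simp
  qed
qed

lemma order_all:
  assumes pd: "piece_decomp y0 A env n t c"
  shows "i < j \<Longrightarrow> j < n \<Longrightarrow> fst (c i) < fst (c j)"
proof (induction j)
  case 0 then show ?case by simp
next
  case (Suc j)
  have s: "fst (c j) < fst (c (Suc j))" using order_consec[OF pd] Suc.prems by simp
  show ?case
  proof (cases "i = j")
    case True then show ?thesis using s by simp
  next
    case False
    then have "fst (c i) < fst (c j)" using Suc by simp
    then show ?thesis using s by simp
  qed
qed

lemma part2:
  assumes pd: "piece_decomp y0 A env n t c"
  shows "(\<forall>i<n. \<forall>j<n. i < j \<longleftrightarrow> fst (c i) < fst (c j)) \<and> inj_on c {..<n} \<and> n + 2 \<le> card A + 2"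
proof -
  have o: "\<And>i j. i < j \<Longrightarrow> j < n \<Longrightarrow> fst (c i) < fst (c j)" using order_all[OF pd] by blast
  have A1: "\<forall>i<n. \<forall>j<n. i < j \<longleftrightarrow> fst (c i) < fst (c j)"
  proof (intro allI impI)
    fix i j assume "i < n" "j < n"
    show "i < j \<longleftrightarrow> fst (c i) < fst (c j)"
      using o[of i j] o[of j i] \<open>i < n\<close> \<open>j < n\<close> by (cases i j rule: linorder_cases) auto
  qed
  have inj: "inj_on c {..<n}"
  proof (rule inj_onI)
    fix i j assume "i \<in> {..<n}" "j \<in> {..<n}" "c i = c j"
    then show "i = j" using o[of i j] o[of j i] by (cases i j rule: linorder_cases) auto
  qed
  have sub: "c ` {..<n} \<subseteq> A" using pd unfolding piece_decomp_def by auto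
  have "n = card (c ` {..<n})" using card_image[OF inj] by simp
  also have "\<dots> \<le> card A" by (rule card_mono[OF fin sub])
  finally show ?thesis using A1 inj by simp
qed



definition w :: "real \<times> real \<Rightarrow> real" where "w a = sqrt (1 - (L - snd a)^2)"

lemma w_bounds:
  assumes a: "a \<in> A" shows "1/2 < w a" "w a \<le> 1"
proof -
  have h: "0 \<le> L - snd a" "L - snd a \<le> 1/2" using inA[OF a] by auto
  have "(L - snd a)^2 \<le> (1/2)^2" using h by (intro power_mono) auto
  then have "(1/2)^2 < 1 - (L - snd a)^2" by (simp add: power2_eq_square)
  then show "1/2 < w a" unfolding w_def by (intro real_less_rsqrt)
  show "w a \<le> 1" unfolding w_def by simp
qed

lemma gc_gt_L:
  assumes a: "a \<in> A"
  shows "L < gc a x \<longleftrightarrow> \<bar>x - fst a\<bar> < w a"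
proof -
  define al where "al = L - snd a"
  define d where "d = x - fst a"
  have al0: "0 \<le> al" using inA[OF a] al_def by simp
  have "L < gc a x \<longleftrightarrow> al < sqrt (max 0 (1 - d^2))"
    unfolding gc_def al_def d_def by linarith
  also have "\<dots> \<longleftrightarrow> sqrt (al^2) < sqrt (max 0 (1 - d^2))" using al0 by simp
  also have "\<dots> \<longleftrightarrow> al^2 < max 0 (1 - d^2)" by (simp only: real_sqrt_less_iff)
  also have "\<dots> \<longleftrightarrow> al^2 < 1 - d^2"
    by (auto simp: less_max_iff_disj)
  also have "\<dots> \<longleftrightarrow> d^2 < 1 - al^2" by linarith
  also have "\<dots> \<longleftrightarrow> sqrt (d^2) < sqrt (1 - al^2)" by (simp only: real_sqrt_less_iff)
  also have "\<dots> \<longleftrightarrow> \<bar>x - fst a\<bar> < w a" by (simp add: d_def w_def al_def)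
  finally show ?thesis .
qed

lemma gc_gt_L_abs: "a \<in> A \<Longrightarrow> L < gc a x \<Longrightarrow> \<bar>x - fst a\<bar> < 1"
  using gc_gt_L w_bounds by fastforce

definition lft :: real where "lft = Min ((\<lambda>a. fst a - w a) ` A)"
definition rgt :: real where "rgt = Max ((\<lambda>a. fst a + w a) ` A)"

lemma env_gt_L_iff: "L < env x \<longleftrightarrow> (\<exists>a\<in>A. L < gc a x)"
proof
  assume h: "L < env x"
  then obtain a where "a \<in> A" "env x = gc a x" using env_gt by blast
  then show "\<exists>a\<in>A. L < gc a x" using h by auto
next
  assume "\<exists>a\<in>A. L < gc a x"
  then obtain a where "a \<in> A" "L < gc a x" by blast
  then show "L < env x" using env_ge[of a x] by simp
qed

lemma env_gt_iff: "L < env x \<longleftrightarrow> lft < x \<and> x < rgt"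
proof
  assume "L < env x"
  then obtain a where a: "a \<in> A" "L < gc a x" using env_gt_L_iff by blast
  then have ax: "\<bar>x - fst a\<bar> < w a" using gc_gt_L by blast
  have "lft \<le> fst a - w a" unfolding lft_def using fin a by simp
  moreover have "fst a + w a \<le> rgt" unfolding rgt_def using fin a by simp
  ultimately show "lft < x \<and> x < rgt" using ax by linarith
next
  assume h: "lft < x \<and> x < rgt"
  have "lft \<in> (\<lambda>a. fst a - w a) ` A" unfolding lft_def using fin ne by (intro Min_in) auto
  then obtain a where a: "a \<in> A" "lft = fst a - w a" by blast
  have "rgt \<in> (\<lambda>a. fst a + w a) ` A" unfolding rgt_def using fin ne by (intro Max_in) auto
  then obtain b where b: "b \<in> A" "rgt = fst b + w b" by blast
  show "L < env x"
  proof (cases "x \<le> x0 + 1/4")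
    case True
    have "\<bar>x - fst a\<bar> < w a" using h a True inA[OF a(1)] w_bounds[OF a(1)] by auto
    then show ?thesis using env_gt_L_iff gc_gt_L a by blast
  next
    case False
    have "\<bar>x - fst b\<bar> < w b" using h b False inA[OF b(1)] w_bounds[OF b(1)] by auto
    then show ?thesis using env_gt_L_iff gc_gt_L b by blast
  qed
qed

lemma lft_rgt: "lft < rgt"
proof -
  obtain a where a: "a \<in> A" using ne by blast
  have "lft \<le> fst a - w a" unfolding lft_def using fin a by simp
  moreover have "fst a + w a \<le> rgt" unfolding rgt_def using fin a by simp
  ultimately show ?thesis using w_bounds[OF a] by linarith
qed

definition E :: "real set" where
  "E = {x. \<exists>a\<in>A. \<exists>b\<in>A. a \<noteq> b \<and> gc a x = gc b x \<and> L < gc a x}"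

lemma pair_unique:
  assumes a: "a \<in> A" and b: "b \<in> A" and ab: "a \<noteq> b"
    and x: "gc a x = gc b x" "L < gc a x" and y: "gc a y = gc b y" "L < gc a y"
  shows "x = y"
proof (rule ccontr)
  assume "x \<noteq> y"
  have ax: "\<bar>x - fst a\<bar> < 1" "\<bar>x - fst b\<bar> < 1" using gc_gt_L_abs a b x by auto
  have ay: "\<bar>y - fst a\<bar> < 1" "\<bar>y - fst b\<bar> < 1" using gc_gt_L_abs a b y by auto
  have key: False if uv: "u < v" "u \<in> {x, y}" "v \<in> {x, y}" for u v
  proof -
    have dom: "\<forall>z\<in>{u..v}. \<bar>z - fst a\<bar> < 1 \<and> \<bar>z - fst b\<bar> < 1"
      using uv ax ay by auto
    have eu: "gc a u - gc b u = 0" and ev: "gc a v - gc b v = 0" using uv x y by auto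
    consider "fst a = fst b" | "fst b < fst a" | "fst a < fst b" by linarith
    then show False
    proof cases
      case 1
      then have "snd a = snd b" using gc_same[OF 1, of u] eu by simp
      then show False using 1 ab by (simp add: prod_eq_iff)
    next
      case 2
      show False using gc_strict[OF 2 uv(1) dom] eu ev by simp
    next
      case 3
      have "\<forall>z\<in>{u..v}. \<bar>z - fst b\<bar> < 1 \<and> \<bar>z - fst a\<bar> < 1" using dom by blast
      then show False using gc_strict[OF 3 uv(1)] eu ev by simp
    qed
  qed
  show False
  proof (cases "x < y")
    case True
    then show ?thesis using key[of x y] by simp
  next
    case False
    then have "y < x" using \<open>x \<noteq> y\<close> by simp
    then show ?thesis using key[of y x] by simp
  qed
qed

lemma subsing_finite: "(\<And>x y. x \<in> S \<Longrightarrow> y \<in> S \<Longrightarrow> x = y) \<Longrightarrow> finite S"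
proof (cases "S = {}")
  case False
  assume h: "\<And>x y. x \<in> S \<Longrightarrow> y \<in> S \<Longrightarrow> x = y"
  obtain x where "x \<in> S" using False by blast
  then have "S \<subseteq> {x}" using h by blast
  then show ?thesis using finite_subset by blast
qed simp

lemma finite_E: "finite E"
proof -
  have "E \<subseteq> (\<Union>p\<in>A \<times> A. {x. fst p \<noteq> snd p \<and> gc (fst p) x = gc (snd p) x \<and> L < gc (fst p) x})"
  proof
    fix x assume "x \<in> E"
    then obtain a b where ab: "a \<in> A" "b \<in> A" "a \<noteq> b" "gc a x = gc b x" "L < gc a x"
      unfolding E_def by blast
    show "x \<in> (\<Union>p\<in>A \<times> A. {x. fst p \<noteq> snd p \<and> gc (fst p) x = gc (snd p) x \<and> L < gc (fst p) x})"
      by (rule UN_I[of "(a, b)"]) (use ab in simp_all)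
  qed
  moreover have "finite (\<Union>p\<in>A \<times> A. {x. fst p \<noteq> snd p \<and> gc (fst p) x = gc (snd p) x \<and> L < gc (fst p) x})"
  proof (rule finite_UN_I)
    show "finite (A \<times> A)" using fin by simp
    fix p assume p: "p \<in> A \<times> A"
    show "finite {x. fst p \<noteq> snd p \<and> gc (fst p) x = gc (snd p) x \<and> L < gc (fst p) x}"
    proof (rule subsing_finite)
      fix x y
      assume "x \<in> {x. fst p \<noteq> snd p \<and> gc (fst p) x = gc (snd p) x \<and> L < gc (fst p) x}"
        "y \<in> {x. fst p \<noteq> snd p \<and> gc (fst p) x = gc (snd p) x \<and> L < gc (fst p) x}"
      then show "x = y" using p pair_unique[of "fst p" "snd p" x y] by (simp add: mem_Times_iff)
    qed
  qed
  ultimately show ?thesis using finite_subset by blast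
qed

lemma gc_sphere:
  assumes "(x - fst a)^2 \<le> 1"
  shows "(x, gc a x) \<in> sphere a 1"
proof -
  obtain a1 a2 where aa: "a = (a1, a2)" by (cases a)
  have "gc a x = a2 + sqrt (1 - (x - a1)^2)" using assms aa by (simp add: gc_def)
  then have "dist a (x, gc a x) = sqrt ((a1 - x)^2 + (1 - (x - a1)^2))"
    using assms aa by (simp add: dist_Pair_Pair dist_real_def)
  also have "\<dots> = 1" by (simp add: power2_commute)
  finally show ?thesis by simp
qed

lemma gap_const:
  assumes uv: "u < v" and sub: "{u<..<v} \<subseteq> {lft<..<rgt}" and noE: "{u<..<v} \<inter> E = {}"
  shows "\<exists>a\<in>A. \<forall>x\<in>{u..v}. (x, env x) \<in> sphere a 1"
proof -
  define G where "G = {u<..<v}"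
  define m where "m = (u + v) / 2"
  have mG: "m \<in> G" using uv by (simp add: G_def m_def)
  have envG: "\<And>x. x \<in> G \<Longrightarrow> L < env x" using sub env_gt_iff G_def by auto
  obtain a where a: "a \<in> A" "env m = gc a m" using env_gt[OF envG[OF mG]] by blast
  define Op where "Op = (\<Inter>b\<in>A - {a}. {x. gc b x < gc a x})"
  define C where "C = {x. env x = gc a x}"
  have openOp: "open Op" unfolding Op_def
    using fin by (intro open_INT) (auto intro!: open_Collect_less gc_cont)
  have gcc: "continuous_on UNIV (gc a)" by (rule gc_cont)
  have closedC: "closed C" unfolding C_def
    by (intro closed_Collect_eq env_cont gcc)
  have S1: "G \<inter> Op = G \<inter> C"
  proof (intro set_eqI iffI)
    fix x assume x: "x \<in> G \<inter> Op"
    have Lx: "L < env x" using envG x by blast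
    obtain b where b: "b \<in> A" "env x = gc b x" using env_gt[OF Lx] by blast
    have "b = a"
    proof (rule ccontr)
      assume "b \<noteq> a"
      then have "gc b x < gc a x" using x b unfolding Op_def by auto
      then show False using env_ge[OF a(1), of x] b by simp
    qed
    then show "x \<in> G \<inter> C" using x b C_def by simp
  next
    fix x assume x: "x \<in> G \<inter> C"
    have Lx: "L < env x" using envG x by blast
    have eq: "env x = gc a x" using x C_def by simp
    have "gc b x < gc a x" if b: "b \<in> A" "b \<noteq> a" for b
    proof -
      have le: "gc b x \<le> gc a x" using env_ge[OF b(1), of x] eq by simp
      have "gc b x \<noteq> gc a x"
      proof
        assume "gc b x = gc a x"
        then have "x \<in> E" unfolding E_def using a b Lx eq by force
        then show False using noE x G_def by blast
      qed
      then show ?thesis using le by simp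
    qed
    then show "x \<in> G \<inter> Op" using x unfolding Op_def by blast
  qed
  have op: "openin (top_of_set G) (G \<inter> C)" using openOp S1 by (metis openin_open_Int)
  have cl: "closedin (top_of_set G) (G \<inter> C)" using closedC by (rule closedin_closed_Int)
  have conn: "connected G" unfolding G_def by simp
  have "G \<inter> C = {} \<or> G \<inter> C = G" using conn op cl unfolding connected_clopen by blast
  moreover have "m \<in> G \<inter> C" using mG a C_def by simp
  ultimately have GC: "G \<subseteq> C" by blast
  have cG: "closure G = {u..v}" unfolding G_def using uv by simp
  have eqall: "\<forall>x\<in>{u..v}. env x = gc a x"
    using closure_minimal[OF GC closedC] cG C_def by auto
  define D where "D = {x. (x - fst a)^2 \<le> 1}"
  have closedD: "closed D" unfolding D_def by (intro closed_Collect_le continuous_intros)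
  have GD: "G \<subseteq> D"
  proof
    fix x assume x: "x \<in> G"
    have "L < gc a x" using envG[OF x] GC x C_def by auto
    then have "\<bar>x - fst a\<bar> < 1" using gc_gt_L_abs a by blast
    then show "x \<in> D" unfolding D_def using abs_square_le_1 by fastforce
  qed
  have Dall: "\<forall>x\<in>{u..v}. (x - fst a)^2 \<le> 1" using closure_minimal[OF GD closedD] cG D_def by auto
  show ?thesis using a(1) eqall Dall gc_sphere by metis
qed



definition wpd :: "nat \<Rightarrow> (nat \<Rightarrow> real) \<Rightarrow> (nat \<Rightarrow> real \<times> real) \<Rightarrow> bool" where
  "wpd n t c \<longleftrightarrow> n \<ge> 1 \<and> (\<forall>i<n. t i < t (Suc i)) \<and>
     (\<forall>x. x \<le> t 0 \<longrightarrow> env x = L) \<and> (\<forall>x. x \<ge> t n \<longrightarrow> env x = L) \<and>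
     (\<forall>i<n. c i \<in> A \<and> (\<forall>x\<in>{t i..t (Suc i)}. (x, env x) \<in> sphere (c i) 1))"

lemma wpd_exists: "\<exists>n t c. wpd n t c"
proof -
  define B where "B = {lft, rgt} \<union> (E \<inter> {lft<..<rgt})"
  have finB: "finite B" unfolding B_def using finite_E by simp
  obtain ts where ts: "sorted_wrt (<) ts" "set ts = B"
    using ex1_sorted_list_for_set_if_finite[OF finB] by blast
  have dist: "distinct ts" using ts(1) strict_sorted_iff by blast
  have lenB: "length ts = card B" using distinct_card[OF dist] ts(2) by simp
  have lr: "lft < rgt" by (rule lft_rgt)
  have "card {lft, rgt} \<le> card B" unfolding B_def using finB B_def by (intro card_mono) auto
  then have len2: "2 \<le> length ts" using lr lenB by simp
  define n where "n = length ts - 1"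
  define t where "t i = ts ! i" for i
  have n1: "n \<ge> 1" using len2 n_def by simp
  have lenn: "length ts = Suc n" using len2 n_def by simp
  have Bsub: "B \<subseteq> {lft..rgt}" unfolding B_def using lr by auto
  have tB: "t i \<in> B" if "i \<le> n" for i using that lenn ts(2) t_def by (metis le_imp_less_Suc nth_mem)
  have mono: "t i < t j" if "i < j" "j \<le> n" for i j
    using sorted_wrt_nth_less[OF ts(1), of i j] that lenn t_def by simp
  have monole: "t i \<le> t j" if "i \<le> j" "j \<le> n" for i j
    using mono[of i j] that by (cases "i = j") auto
  have inB: "\<exists>k\<le>n. t k = y" if "y \<in> B" for y
    using that ts(2) lenn t_def by (metis in_set_conv_nth less_Suc_eq_le)
  have t0: "t 0 = lft"
  proof -
    obtain k where k: "k \<le> n" "t k = lft" using inB[of lft] B_def by auto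
    have "t 0 \<ge> lft" using tB[of 0] Bsub by auto
    moreover have "t 0 \<le> t k" using monole[of 0 k] k by simp
    ultimately show ?thesis using k by simp
  qed
  have tn: "t n = rgt"
  proof -
    obtain k where k: "k \<le> n" "t k = rgt" using inB[of rgt] B_def by auto
    have "t n \<le> rgt" using tB[of n] Bsub by auto
    moreover have "t k \<le> t n" using monole[of k n] k by simp
    ultimately show ?thesis using k by simp
  qed
  have gaps: "\<exists>a\<in>A. \<forall>x\<in>{t i..t (Suc i)}. (x, env x) \<in> sphere a 1" if i: "i < n" for i
  proof (rule gap_const)
    show "t i < t (Suc i)" using mono[of i "Suc i"] i by simp
    have "lft \<le> t i" using t0 monole[of 0 i] i by simp
    moreover have "t (Suc i) \<le> rgt" using tn monole[of "Suc i" n] i by simp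
    ultimately show "{t i<..<t (Suc i)} \<subseteq> {lft<..<rgt}" by auto
    show "{t i<..<t (Suc i)} \<inter> E = {}"
    proof (rule ccontr)
      assume "{t i<..<t (Suc i)} \<inter> E \<noteq> {}"
      then obtain x where x: "t i < x" "x < t (Suc i)" "x \<in> E" by auto
      have "lft \<le> t i" using t0 monole[of 0 i] i by simp
      moreover have "t (Suc i) \<le> rgt" using tn monole[of "Suc i" n] i by simp
      ultimately have "x \<in> B" using x unfolding B_def by auto
      then obtain k where k: "k \<le> n" "t k = x" using inB by blast
      show False
      proof (cases "k \<le> i")
        case True
        then show False using monole[of k i] i k x by simp
      next
        case False
        then show False using monole[of "Suc i" k] i k x by simp
      qed
    qed
  qed
  have "\<forall>i. \<exists>a. i < n \<longrightarrow> a \<in> A \<and> (\<forall>x\<in>{t i..t (Suc i)}. (x, env x) \<in> sphere a 1)"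
    using gaps by metis
  then obtain c where c: "\<forall>i. i < n \<longrightarrow> c i \<in> A \<and> (\<forall>x\<in>{t i..t (Suc i)}. (x, env x) \<in> sphere (c i) 1)"
    by (metis choice)
  have left: "\<forall>x. x \<le> t 0 \<longrightarrow> env x = L"
    using t0 env_gt_iff env_ge_L by (metis linorder_not_le order_le_less)
  have right: "\<forall>x. x \<ge> t n \<longrightarrow> env x = L"
    using tn env_gt_iff env_ge_L by (metis linorder_not_le order_le_less)
  have "wpd n t c" unfolding wpd_def using n1 mono left right c by auto
  then show ?thesis by blast
qed

lemma wpd_merge:
  assumes w: "wpd n t c" and i: "Suc i < n" and eq: "c i = c (Suc i)"
  shows "wpd (n - 1) (\<lambda>j. if j \<le> i then t j else t (Suc j)) (\<lambda>j. if j < i then c j else c (Suc j))"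
proof -
  define t' where "t' = (\<lambda>j. if j \<le> i then t j else t (Suc j))"
  define c' where "c' = (\<lambda>j. if j < i then c j else c (Suc j))"
  have n1: "n - 1 \<ge> 1" using i by simp
  have tm: "\<And>j. j < n \<Longrightarrow> t j < t (Suc j)" using w unfolding wpd_def by auto
  have pc: "\<And>j. j < n \<Longrightarrow> c j \<in> A \<and> (\<forall>x\<in>{t j..t (Suc j)}. (x, env x) \<in> sphere (c j) 1)"
    using w unfolding wpd_def by auto
  have m1: "t' j < t' (Suc j)" if j: "j < n - 1" for j
  proof (cases "j < i")
    case True then show ?thesis using tm[of j] i unfolding t'_def by simp
  next
    case False
    show ?thesis
    proof (cases "j = i")
      case True
      then show ?thesis using tm[of i] tm[of "Suc i"] i unfolding t'_def by simp
    next
      case False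
      then show ?thesis using tm[of "Suc j"] j \<open>\<not> j < i\<close> unfolding t'_def by simp
    qed
  qed
  have l0: "t' 0 = t 0" unfolding t'_def by simp
  have ni: "\<not> (n - 1 \<le> i)" "Suc (n - 1) = n" using i by auto
  have ln: "t' (n - 1) = t n" unfolding t'_def using ni by simp
  have p: "c' j \<in> A \<and> (\<forall>x\<in>{t' j..t' (Suc j)}. (x, env x) \<in> sphere (c' j) 1)" if j: "j < n - 1" for j
  proof (cases "j < i")
    case True then show ?thesis using pc[of j] i unfolding t'_def c'_def by simp
  next
    case False
    show ?thesis
    proof (cases "j = i")
      case True
      have A1: "c i \<in> A" using pc[of i] i by simp
      have "\<forall>x\<in>{t i..t (Suc (Suc i))}. (x, env x) \<in> sphere (c i) 1"
      proof
        fix x assume x: "x \<in> {t i..t (Suc (Suc i))}"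
        show "(x, env x) \<in> sphere (c i) 1"
        proof (cases "x \<le> t (Suc i)")
          case True then show ?thesis using pc[of i] i x by auto
        next
          case False then show ?thesis using pc[of "Suc i"] i x eq by auto
        qed
      qed
      then show ?thesis using True A1 eq unfolding t'_def c'_def by simp
    next
      case False
      then show ?thesis using pc[of "Suc j"] j \<open>\<not> j < i\<close> unfolding t'_def c'_def by simp
    qed
  qed
  have "wpd (n - 1) t' c'" unfolding wpd_def
    using n1 m1 l0 ln p w unfolding wpd_def by auto
  then show ?thesis unfolding t'_def c'_def .
qed

lemma pd_exists: "\<exists>n t c. piece_decomp y0 A env n t c"
proof -
  define n where "n = (LEAST n. \<exists>t c. wpd n t c)"
  have "\<exists>t c. wpd n t c" unfolding n_def using wpd_exists by (rule LeastI_ex)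
  then obtain t c where w: "wpd n t c" by blast
  have minl: "\<not> (\<exists>t c. wpd m t c)" if "m < n" for m
    using not_less_Least[of m "\<lambda>n. \<exists>t c. wpd n t c"] that n_def by simp
  have diff: "\<forall>i. Suc i < n \<longrightarrow> c i \<noteq> c (Suc i)"
  proof (intro allI impI notI)
    fix i assume i: "Suc i < n" and eq: "c i = c (Suc i)"
    have "n - 1 < n" using i by simp
    then show False using minl wpd_merge[OF w i eq] by blast
  qed
  have "piece_decomp y0 A env n t c"
    using w diff unfolding wpd_def piece_decomp_def L_def by auto
  then show ?thesis by blast
qed

end

theorem fact3:
  fixes x0 y0 :: real and A :: "(real \<times> real) set"
  assumes "finite A" and "A \<noteq> {}" and "A \<subseteq> square x0 y0"
  shows "\<exists>f :: real \<Rightarrow> real.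
           continuous_on UNIV f \<and>
           xi y0 A = {(x, f x) | x. True} \<and>
           (\<exists>n t c. piece_decomp y0 A f n t c) \<and>
           (\<forall>n t c. piece_decomp y0 A f n t c \<longrightarrow>
              (\<forall>i<n. \<forall>j<n. i < j \<longleftrightarrow> fst (c i) < fst (c j)) \<and>
              inj_on c {..<n} \<and>
              n + 2 \<le> card A + 2)"
proof -
  interpret envs x0 y0 A using assms by unfold_locales
  show ?thesis
    by (rule exI[of _ env]) (use env_cont xi_graph pd_exists part2 in blast)
qed

end
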